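(* Let $A$ be a synaptic algebra, $p,q\in P$, $c:=(pqp+p^{\perp}q^{\perp}p^{\perp})^{1/2}$ and $s:=(pq^{\perp}p+p^{\perp}qp^{\perp})^{1/2}$. Then: (i) $c^2s^2=pqp+qpq-pqpq-qpqp=p(qp^{\perp}q)p+p^{\perp}(qpq)p^{\perp}=(pqp^{\perp}+p^{\perp}qp)^2$; (ii) $cs=|pqp^{\perp}+p^{\perp}qp|$.
   Context: Synaptic algebra (Foulis): $R$ is a real linear associative algebra with unit $1$, and $A\subseteq R$ is a real linear subspace with $1\in A$. For $a,b\in A$ write $aCb$ iff $ab=ba$; $C(a):=\{b\in A: aCb\}$; $CC(a):=\{b\in A: bCd \text{ for all } d\in C(a)\}$. $A$ is a synaptic algebra with enveloping algebra $R$ iff: (SA1) $A$ is a partially ordered archimedean real linear space with positive cone $A^+$, $1$ is an order unit, $\|\cdot\|$ the order-unit norm; (SA2) $a\in A\Rightarrow a^2\in A^+$; (SA3) $a,b\in A^+\Rightarrow aba\in A^+$; (SA4) if $a\in A$, $b\in A^+$, $aba=0$ then $ab=ba=0$; (SA5) if $a\in A^+$ there is $b\in A^+\cap CC(a)$ with $b^2=a$; (SA6) for $a\in A$ there is $p=p^2\in A$ with $ab=0\Leftrightarrow pb=0$ for all $b\in A$; (SA7) if $1\le a$ there is $b\in A$ with $ab=ba=1$; (SA8) if $a,b\in A$, $a_1\le a_2\le\cdots$ are pairwise commuting elements of $C(b)$ with $\|a-a_n\|\to0$, then $a\in C(b)$. $A$ is nondegenerate. Products are computed in $R$. $P:=\{p\in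 A:p=p^2\}$, $p^{\perp}:=1-p$. For $0\le a$, $a^{1/2}$ is its unique positive square root in $A$; $|a|:=(a^2)^{1/2}$. ($c$ and $s$ commute, so $cs\in A$.) *)

theory Defs
  imports Main "HOL.Real_Vector_Spaces"
begin

text \<open>A synaptic algebra A (a subset of the enveloping algebra, the type 'r) with
positive cone Pos.  The partial order is  a \<le> b  iff  b - a \<in> Pos.\<close>

definition sa_le :: "'r::real_algebra_1 set \<Rightarrow> 'r \<Rightarrow> 'r \<Rightarrow> bool" where
  "sa_le Pos a b \<longleftrightarrow> b - a \<in> Pos"

definition commutant :: "'r::real_algebra_1 set \<Rightarrow> 'r \<Rightarrow> 'r set" where
  "commutant A a = {b \<in> A. a * b = b * a}"

definition bicommutant :: "'r::real_algebra_1 set \<Rightarrow> 'r \<Rightarrow> 'r set" where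
  "bicommutant A a = {b \<in> A. \<forall>d \<in> commutant A a. b * d = d * b}"

definition ou_norm :: "'r::real_algebra_1 set \<Rightarrow> 'r \<Rightarrow> real" where
  "ou_norm Pos a = Inf {l. 0 < l \<and> sa_le Pos (- (l *\<^sub>R 1)) a \<and> sa_le Pos a (l *\<^sub>R 1)}"

definition synaptic_algebra :: "'r::real_algebra_1 set \<Rightarrow> 'r set \<Rightarrow> bool" where
  "synaptic_algebra A Pos \<longleftrightarrow>
     \<comment> \<open>A is a real linear subspace of R containing 1; nondegenerate\<close>
     0 \<in> A \<and> 1 \<in> A \<and> (1::'r) \<noteq> 0 \<and>
     (\<forall>a\<in>A. \<forall>b\<in>A. a + b \<in> A) \<and> (\<forall>a\<in>A. \<forall>r::real. r *\<^sub>R a \<in> A) \<and>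
     \<comment> \<open>(SA1) partially ordered archimedean real linear space, 1 an order unit\<close>
     Pos \<subseteq> A \<and> 0 \<in> Pos \<and>
     (\<forall>a\<in>Pos. \<forall>b\<in>Pos. a + b \<in> Pos) \<and>
     (\<forall>a\<in>Pos. \<forall>r::real. 0 \<le> r \<longrightarrow> r *\<^sub>R a \<in> Pos) \<and>
     (\<forall>a\<in>Pos. - a \<in> Pos \<longrightarrow> a = 0) \<and>
     (\<forall>a\<in>A. \<forall>b\<in>A. (\<forall>n::nat. sa_le Pos (of_nat n *\<^sub>R a) b) \<longrightarrow> sa_le Pos a 0) \<and>
     (\<forall>a\<in>A. \<exists>n::nat. sa_le Pos a (of_nat n *\<^sub>R 1)) \<and>
     \<comment> \<open>(SA2)\<close>
     (\<forall>a\<in>A. a * a \<in> Pos) \<and>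
     \<comment> \<open>(SA3)\<close>
     (\<forall>a\<in>Pos. \<forall>b\<in>Pos. a * b * a \<in> Pos) \<and>
     \<comment> \<open>(SA4)\<close>
     (\<forall>a\<in>A. \<forall>b\<in>Pos. a * b * a = 0 \<longrightarrow> a * b = 0 \<and> b * a = 0) \<and>
     \<comment> \<open>(SA5)\<close>
     (\<forall>a\<in>Pos. \<exists>b\<in>Pos. b \<in> bicommutant A a \<and> b * b = a) \<and>
     \<comment> \<open>(SA6)\<close>
     (\<forall>a\<in>A. \<exists>p\<in>A. p * p = p \<and> (\<forall>b\<in>A. a * b = 0 \<longleftrightarrow> p * b = 0)) \<and>
     \<comment> \<open>(SA7)\<close>
     (\<forall>a\<in>A. sa_le Pos 1 a \<longrightarrow> (\<exists>b\<in>A. a * b = 1 \<and> b * a = 1)) \<and>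
     \<comment> \<open>(SA8)\<close>
     (\<forall>a\<in>A. \<forall>b\<in>A. \<forall>an::nat \<Rightarrow> 'r.
        (\<forall>n. an n \<in> commutant A b) \<and>
        (\<forall>m n. an m * an n = an n * an m) \<and>
        (\<forall>n. sa_le Pos (an n) (an (Suc n))) \<and>
        (\<lambda>n. ou_norm Pos (a - an n)) \<longlonglongrightarrow> 0
        \<longrightarrow> a \<in> commutant A b)"

definition projections :: "'r::real_algebra_1 set \<Rightarrow> 'r set" where
  "projections A = {p \<in> A. p * p = p}"

definition perp :: "'r::real_algebra_1 \<Rightarrow> 'r" where
  "perp p = 1 - p"

definition sa_sqrt :: "'r::real_algebra_1 set \<Rightarrow> 'r \<Rightarrow> 'r" where
  "sa_sqrt Pos a = (THE b. b \<in> Pos \<and> b * b = a)"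

definition sa_abs :: "'r::real_algebra_1 set \<Rightarrow> 'r \<Rightarrow> 'r" where
  "sa_abs Pos a = sa_sqrt Pos (a * a)"

end

theory Submission
  imports Defs
begin

lemma sa_f0: assumes SA: "synaptic_algebra A Pos" shows "Pos \<subseteq> A"
  using SA unfolding synaptic_algebra_def by (elim conjE)

lemma sa_f1: assumes SA: "synaptic_algebra A Pos" shows "1 \<in> A"
  using SA unfolding synaptic_algebra_def by (elim conjE)

lemma sa_f2: assumes SA: "synaptic_algebra A Pos" shows "\<forall>a\<in>A. \<forall>b\<in>A. a + b \<in> A"
  using SA unfolding synaptic_algebra_def by (elim conjE)

lemma sa_f3: assumes SA: "synaptic_algebra A Pos" shows "\<forall>a\<in>A. \<forall>r::real. r *\<^sub>R a \<in> A"
  using SA unfolding synaptic_algebra_def by (elim conjE)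

lemma sa_f4: assumes SA: "synaptic_algebra A Pos" shows "\<forall>a\<in>Pos. \<forall>b\<in>Pos. a + b \<in> Pos"
  using SA unfolding synaptic_algebra_def by (elim conjE)

lemma sa_f5: assumes SA: "synaptic_algebra A Pos" shows "\<forall>a\<in>Pos. - a \<in> Pos \<longrightarrow> a = 0"
  using SA unfolding synaptic_algebra_def by (elim conjE)

lemma sa_f6: assumes SA: "synaptic_algebra A Pos" shows "\<forall>a\<in>A. a * a \<in> Pos"
  using SA unfolding synaptic_algebra_def by (elim conjE)

lemma sa_f7: assumes SA: "synaptic_algebra A Pos" shows "\<forall>a\<in>Pos. \<forall>b\<in>Pos. a * b * a \<in> Pos"
  using SA unfolding synaptic_algebra_def by (elim conjE)

lemma sa_f8: assumes SA: "synaptic_algebra A Pos" shows "\<forall>a\<in>A. \<forall>b\<in>Pos. a * b * a = 0 \<longrightarrow> a * b = 0 \<and> b * a = 0"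
  using SA unfolding synaptic_algebra_def by (elim conjE)

lemma sa_f9: assumes SA: "synaptic_algebra A Pos" shows "\<forall>a\<in>Pos. \<exists>b\<in>Pos. b \<in> bicommutant A a \<and> b * b = a"
  using SA unfolding synaptic_algebra_def by (elim conjE)

lemma sa_facts:
  assumes SA: "synaptic_algebra A Pos"
  shows "Pos \<subseteq> A" "1 \<in> A" "\<And>a b. a\<in>A \<Longrightarrow> b\<in>A \<Longrightarrow> a + b \<in> A"
    "\<And>a r. a\<in>A \<Longrightarrow> r *\<^sub>R a \<in> A"
    "\<And>a b. a\<in>Pos \<Longrightarrow> b\<in>Pos \<Longrightarrow> a + b \<in> Pos"
    "\<And>a. a\<in>Pos \<Longrightarrow> - a \<in> Pos \<Longrightarrow> a = 0"
    "\<And>a. a\<in>A \<Longrightarrow> a * a \<in> Pos"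
    "\<And>a b. a\<in>Pos \<Longrightarrow> b\<in>Pos \<Longrightarrow> a * b * a \<in> Pos"
    "\<And>a b. a\<in>A \<Longrightarrow> b\<in>Pos \<Longrightarrow> a * b * a = 0 \<Longrightarrow> a * b = 0"
    "\<And>a. a\<in>Pos \<Longrightarrow> \<exists>b\<in>Pos. b \<in> bicommutant A a \<and> b * b = a"
  subgoal by (rule sa_f0[OF SA])
  subgoal by (rule sa_f1[OF SA])
  subgoal using sa_f2[OF SA] by blast
  subgoal using sa_f3[OF SA] by blast
  subgoal using sa_f4[OF SA] by blast
  subgoal using sa_f5[OF SA] by blast
  subgoal using sa_f6[OF SA] by blast
  subgoal using sa_f7[OF SA] by blast
  subgoal using sa_f8[OF SA] by blast
  subgoal using sa_f9[OF SA] by blast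
  done

lemma sa_diff:
  assumes SA: "synaptic_algebra A Pos" and "a \<in> A" "b \<in> A"
  shows "a - b \<in> A"
proof -
  have "(-1::real) *\<^sub>R b \<in> A" using sa_facts(4)[OF SA] assms by blast
  then have "a + (-1::real) *\<^sub>R b \<in> A" using sa_facts(3)[OF SA] assms by blast
  then show ?thesis by simp
qed

lemma one_pos:
  assumes SA: "synaptic_algebra A Pos" shows "1 \<in> Pos"
  using sa_facts(7)[OF SA sa_facts(2)[OF SA]] by simp

lemma sq_zero:
  assumes SA: "synaptic_algebra A Pos" and "x \<in> A" "x * x = 0"
  shows "x = 0"
  using sa_facts(9)[OF SA assms(2) one_pos[OF SA]] assms(3) by simp

lemma sqrt_unique:
  assumes SA: "synaptic_algebra A Pos"
    and b0: "b0 \<in> bicommutant A a" "b0 \<in> Pos" "b0 * b0 = a"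
    and b: "b \<in> Pos" "b * b = a"
  shows "b = b0"
proof -
  have PA: "Pos \<subseteq> A" using sa_facts[OF SA] by blast
  have bA: "b \<in> A" "b0 \<in> A" using b b0 PA by auto
  have "b \<in> commutant A a" unfolding commutant_def using bA b(2)
    by (auto simp: mult.assoc[symmetric])
  then have cm: "b * b0 = b0 * b" using b0(1) unfolding bicommutant_def by auto
  define d where "d = b - b0"
  define e where "e = b + b0"
  have dA: "d \<in> A" using sa_diff[OF SA bA] d_def by simp
  have de: "d * e = 0" unfolding d_def e_def
    by (simp add: algebra_simps b(2) b0(3) cm)
  have fP: "d * d \<in> Pos" using sa_facts(7)[OF SA dA] .
  have X: "d*d*b*(d*d) \<in> Pos" using sa_facts(8)[OF SA fP b(1)] .
  have Y: "d*d*b0*(d*d) \<in> Pos" using sa_facts(8)[OF SA fP b0(2)] .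
  have XY: "d*d*b*(d*d) + d*d*b0*(d*d) = 0"
  proof -
    have "d*d*b*(d*d) + d*d*b0*(d*d) = d*(d*e)*(d*d)" unfolding e_def
      by (simp add: algebra_simps)
    then show ?thesis using de by simp
  qed
  then have "- (d*d*b*(d*d)) = d*d*b0*(d*d)" by (simp add: add_eq_0_iff)
  then have X0: "d*d*b*(d*d) = 0" using sa_facts(6)[OF SA X] Y by simp
  then have Y0: "d*d*b0*(d*d) = 0" using XY by simp
  have "d*d*d*(d*d) = d*d*b*(d*d) - d*d*b0*(d*d)" unfolding d_def
    by (simp add: algebra_simps)
  then have d5: "d*d*d*(d*d) = 0" using X0 Y0 by simp
  have "(d*d)*(d*d)*((d*d)*(d*d)) = 0"
  proof -
    have "(d*d)*(d*d)*((d*d)*(d*d)) = d * (d * (d*d*d*(d*d))) * d" by (simp add: mult.assoc)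
    then show ?thesis using d5 by simp
  qed
  moreover have gA: "(d*d)*(d*d) \<in> A" using sa_facts(7)[OF SA] PA fP by blast
  ultimately have "(d*d)*(d*d) = 0" using sq_zero[OF SA] by blast
  then have "d*d = 0" using sq_zero[OF SA] fP PA by blast
  then have "d = 0" using sq_zero[OF SA dA] by blast
  then show ?thesis unfolding d_def by simp
qed

lemma sqrt_props:
  assumes SA: "synaptic_algebra A Pos" and a: "a \<in> Pos"
  shows "sa_sqrt Pos a \<in> Pos \<and> sa_sqrt Pos a * sa_sqrt Pos a = a
         \<and> sa_sqrt Pos a \<in> bicommutant A a"
proof -
  obtain b0 where b0: "b0 \<in> Pos" "b0 \<in> bicommutant A a" "b0 * b0 = a"
    using sa_facts(10)[OF SA a] by blast
  have "sa_sqrt Pos a = b0" unfolding sa_sqrt_def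
  proof (rule the_equality)
    show "b0 \<in> Pos \<and> b0 * b0 = a" using b0 by simp
    fix x assume "x \<in> Pos \<and> x * x = a"
    then show "x = b0" using sqrt_unique[OF SA b0(2,1,3)] by blast
  qed
  then show ?thesis using b0 by simp
qed

lemma sqrt_eq:
  assumes SA: "synaptic_algebra A Pos" and b: "b \<in> Pos" "b * b = a"
  shows "sa_sqrt Pos a = b"
proof -
  have "a \<in> Pos" using sa_facts(7)[OF SA] sa_facts(1)[OF SA] b by blast
  obtain b0 where b0: "b0 \<in> Pos" "b0 \<in> bicommutant A a" "b0 * b0 = a"
    using sa_facts(10)[OF SA \<open>a \<in> Pos\<close>] by blast
  have "sa_sqrt Pos a = b0" unfolding sa_sqrt_def
  proof (rule the_equality)
    show "b0 \<in> Pos \<and> b0 * b0 = a" using b0 by simp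
    fix x assume "x \<in> Pos \<and> x * x = a"
    then show "x = b0" using sqrt_unique[OF SA b0(2,1,3)] by blast
  qed
  then show ?thesis using sqrt_unique[OF SA b0(2,1,3) b] by simp
qed

lemma prod_pos:
  assumes SA: "synaptic_algebra A Pos" and c: "c \<in> Pos" and s: "s \<in> Pos"
    and cs: "c * s = s * c"
  shows "c * s \<in> Pos"
proof -
  obtain t where t: "t \<in> Pos" "t \<in> bicommutant A s" "t * t = s"
    using sa_facts(10)[OF SA s] by blast
  have "c \<in> commutant A s" using c cs sa_facts(1)[OF SA] unfolding commutant_def by auto
  then have tc: "t * c = c * t" using t(2) unfolding bicommutant_def by auto
  have "t * c * t \<in> Pos" using sa_facts(8)[OF SA t(1) c] .
  moreover have "t * c * t = c * s"
  proof -
    have "t * c * t = c * t * t" using tc by simp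
    also have "\<dots> = c * (t * t)" by (simp add: mult.assoc)
    finally show ?thesis using t(3) by simp
  qed
  ultimately show ?thesis by simp
qed

lemma proj_pos:
  assumes SA: "synaptic_algebra A Pos" and p: "p \<in> projections A"
  shows "p \<in> Pos" "perp p \<in> Pos" "p * p = p" "perp p \<in> A"
proof -
  have pA: "p \<in> A" and pp: "p * p = p" using p unfolding projections_def by auto
  show "p \<in> Pos" using sa_facts(7)[OF SA pA] pp by simp
  show "perp p \<in> A" unfolding perp_def using sa_diff[OF SA sa_facts(2)[OF SA] pA] .
  moreover have "perp p * perp p = perp p" unfolding perp_def using pp by (simp add: algebra_simps)
  ultimately show "perp p \<in> Pos" using sa_facts(7)[OF SA, of "perp p"] by simp
  show "p * p = p" by fact
qed

theorem theorem5p2: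
  fixes A Pos :: "'r::real_algebra_1 set" and p q c s :: 'r
  assumes SA: "synaptic_algebra A Pos"
    and p: "p \<in> projections A" and q: "q \<in> projections A"
    and c: "c = sa_sqrt Pos (p * q * p + perp p * perp q * perp p)"
    and s: "s = sa_sqrt Pos (p * perp q * p + perp p * q * perp p)"
  shows "c\<^sup>2 * s\<^sup>2 = p * q * p + q * p * q - p * q * p * q - q * p * q * p
       \<and> p * q * p + q * p * q - p * q * p * q - q * p * q * p
           = p * (q * perp p * q) * p + perp p * (q * p * q) * perp p
       \<and> p * (q * perp p * q) * p + perp p * (q * p * q) * perp p
           = (p * q * perp p + perp p * q * p)\<^sup>2
       \<and> c * s = sa_abs Pos (p * q * perp p + perp p * q * p)"
proof -
  note pP = proj_pos[OF SA p] and qP = proj_pos[OF SA q]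
  define C where "C = p * q * p + perp p * perp q * perp p"
  define S where "S = p * perp q * p + perp p * q * perp p"
  have CP: "C \<in> Pos" unfolding C_def
    by (rule sa_facts(5)[OF SA sa_facts(8)[OF SA pP(1) qP(1)] sa_facts(8)[OF SA pP(2) qP(2)]])
  have SP: "S \<in> Pos" unfolding S_def
    by (rule sa_facts(5)[OF SA sa_facts(8)[OF SA pP(1) qP(2)] sa_facts(8)[OF SA pP(2) qP(1)]])
  have pp: "p * p = p" and qq: "q * q = q" using pP qP by auto
  have pp': "p * (p * x) = p * x" for x using pp by (metis mult.assoc)
  have qq': "q * (q * x) = q * x" for x using qq by (metis mult.assoc)
  have SC: "S = 1 - C" unfolding S_def C_def perp_def
    by (simp add: algebra_simps pp pp' qq qq')
  note cpr = sqrt_props[OF SA CP] and spr = sqrt_props[OF SA SP]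
  have cc: "c * c = C" and ss: "s * s = S" using cpr spr c s C_def S_def by auto
  have cP: "c \<in> Pos" and sP: "s \<in> Pos" using cpr spr c s C_def S_def by auto
  have sA: "s \<in> A" using sP sa_facts(1)[OF SA] by blast
  have Cs: "C = 1 - s * s" using SC ss by simp
  have "s * C = C * s" unfolding Cs by (simp add: algebra_simps mult.assoc)
  then have "s \<in> commutant A C" using sA unfolding commutant_def by auto
  then have cs: "c * s = s * c" using cpr c C_def unfolding bicommutant_def by auto
  have e1: "C * S = p * q * p + q * p * q - p * q * p * q - q * p * q * p"
    unfolding SC C_def perp_def by (simp add: algebra_simps pp pp' qq qq')
  have e2: "p * q * p + q * p * q - p * q * p * q - q * p * q * p
           = p * (q * perp p * q) * p + perp p * (q * p * q) * perp p"
    unfolding perp_def by (simp add: algebra_simps pp pp' qq qq')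
  have e3: "p * (q * perp p * q) * p + perp p * (q * p * q) * perp p
           = (p * q * perp p + perp p * q * p)\<^sup>2"
    unfolding perp_def power2_eq_square by (simp add: algebra_simps pp pp' qq qq')
  have cs2: "c\<^sup>2 * s\<^sup>2 = C * S" unfolding power2_eq_square cc[symmetric] ss[symmetric]
    by simp
  have csq: "(c * s) * (c * s) = C * S"
  proof -
    have "(c * s) * (c * s) = c * (s * c) * s" by (simp add: mult.assoc)
    also have "\<dots> = (c * c) * (s * s)" unfolding cs[symmetric] by (simp add: mult.assoc)
    finally show ?thesis using cc ss by simp
  qed
  have xx: "C * S = (p * q * perp p + perp p * q * p)\<^sup>2"
    by (rule trans[OF e1 trans[OF e2 e3]])
  have ab: "sa_abs Pos (p * q * perp p + perp p * q * p) = c * s"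
    unfolding sa_abs_def
    apply (rule sqrt_eq[OF SA prod_pos[OF SA cP sP cs]])
    using csq xx by (simp only: power2_eq_square)
  show ?thesis using trans[OF cs2 e1] e2 e3 ab[symmetric] by blast
qed

end
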